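(* Let $X,Y$ be finite sets with $\max\{|X|,|Y|\}\le N<\infty$, $c\in\mathbb R_+^{X\times Y}$, and let $\mu\in\mathcal P(X)$, $\nu\in\mathcal P(Y)$ satisfy $\mu=r/M$, $\nu=s/M$ for a positive integer $M$ and vectors $r\in\mathbb Z_{++}^X$, $s\in\mathbb Z_{++}^Y$ of strictly positive integers. Let $\varepsilon_1>\varepsilon_2>0$ and let $(\alpha_a,\beta_a)$ be a maximizer of $J_{\varepsilon_a}$ for $a=1,2$. Set $\Delta\alpha=\alpha_2-\alpha_1$, $\Delta\beta=\beta_2-\beta_1$. Then $$\max\Delta\alpha-\min\Delta\alpha\le\varepsilon_1 N(4\log N+24\log M),\qquad\max\Delta\beta-\min\Delta\beta\le\varepsilon_1N(4\log N+24\log M).$$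
   Context: For $\varepsilon>0$, $K_\varepsilon(x,y)=\exp(-c(x,y)/\varepsilon)\mu(x)\nu(y)$ and the dual entropic optimal transport functional is $J_\varepsilon(\alpha,\beta)=\langle\alpha,\mu\rangle+\langle\beta,\nu\rangle-\varepsilon\sum_{x,y}K_\varepsilon(x,y)\big(\exp((\alpha(x)+\beta(y))/\varepsilon)-1\big)$ for $\alpha\in\mathbb R^X,\beta\in\mathbb R^Y$. $\max\Delta\alpha$ denotes the largest entry of the vector $\Delta\alpha$ (similarly $\min$). *)

theory Defs
  imports "HOL-Analysis.Analysis"
begin

text \<open>Finite sets X, Y are represented by finite types 'x, 'y. Vectors are functions.\<close>

definition Kmat :: "real \<Rightarrow> ('x \<Rightarrow> 'y \<Rightarrow> real) \<Rightarrow> ('x \<Rightarrow> real) \<Rightarrow> ('y \<Rightarrow> real) \<Rightarrow> 'x \<Rightarrow> 'y \<Rightarrow> real" where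
  "Kmat \<epsilon> c \<mu> \<nu> x y = exp (- c x y / \<epsilon>) * \<mu> x * \<nu> y"

definition Jdual :: "real \<Rightarrow> ('x::finite \<Rightarrow> 'y::finite \<Rightarrow> real) \<Rightarrow> ('x \<Rightarrow> real) \<Rightarrow> ('y \<Rightarrow> real)
                      \<Rightarrow> ('x \<Rightarrow> real) \<Rightarrow> ('y \<Rightarrow> real) \<Rightarrow> real" where
  "Jdual \<epsilon> c \<mu> \<nu> \<alpha> \<beta> =
     (\<Sum>x\<in>UNIV. \<alpha> x * \<mu> x) + (\<Sum>y\<in>UNIV. \<beta> y * \<nu> y)
     - \<epsilon> * (\<Sum>x\<in>UNIV. \<Sum>y\<in>UNIV. Kmat \<epsilon> c \<mu> \<nu> x y * (exp ((\<alpha> x + \<beta> y) / \<epsilon>) - 1))"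

definition is_maximizer_J :: "real \<Rightarrow> ('x::finite \<Rightarrow> 'y::finite \<Rightarrow> real) \<Rightarrow> ('x \<Rightarrow> real) \<Rightarrow> ('y \<Rightarrow> real)
                      \<Rightarrow> ('x \<Rightarrow> real) \<Rightarrow> ('y \<Rightarrow> real) \<Rightarrow> bool" where
  "is_maximizer_J \<epsilon> c \<mu> \<nu> \<alpha> \<beta> \<longleftrightarrow> (\<forall>\<alpha>' \<beta>'. Jdual \<epsilon> c \<mu> \<nu> \<alpha>' \<beta>' \<le> Jdual \<epsilon> c \<mu> \<nu> \<alpha> \<beta>)"

end

theory Submission
  imports Defs
begin


lemma fin_argmax:
  fixes f :: "'a \<Rightarrow> real"
  assumes "finite Z" "Z \<noteq> {}"
  shows "\<exists>z\<in>Z. \<forall>z'\<in>Z. f z' \<le> f z"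
proof -
  have "Max (f ` Z) \<in> f ` Z" using assms by (intro Max_in) auto
  then obtain z where z: "z \<in> Z" "f z = Max (f ` Z)" by auto
  show ?thesis using z assms by (metis Max_ge finite_imageI image_eqI)
qed

lemma exp_strict: "(z::real) \<noteq> 0 \<Longrightarrow> 1 + z < exp z"
proof -
  assume z: "z \<noteq> 0"
  show ?thesis
  proof (cases "z < -2")
    case True
    then show ?thesis by (smt (verit) exp_gt_zero)
  next
    case False
    have "1 + z/2 \<le> exp (z/2)" by (rule exp_ge_add_one_self)
    moreover have "0 \<le> 1 + z/2" using False by simp
    ultimately have "(1 + z/2)^2 \<le> (exp (z/2))^2" by (rule power_mono)
    moreover have "(exp (z/2))^2 = exp z" by (simp add: power2_eq_square flip: exp_add)
    moreover have "(1 + z/2)^2 = 1 + z + z^2/4" by (simp add: power2_eq_square field_simps)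
    moreover have "z^2 > 0" using z by simp
    ultimately show ?thesis by linarith
  qed
qed

lemma spread:
  fixes V :: "real set"
  assumes "finite V" "V \<noteq> {}" "G \<ge> 0"
    and gap: "\<And>a b. a\<in>V \<Longrightarrow> b\<in>V \<Longrightarrow> a<b \<Longrightarrow> (\<forall>z\<in>V. z \<le> a \<or> b \<le> z) \<Longrightarrow> b - a \<le> G"
  shows "Max V - Min V \<le> real (card V - 1) * G"
  using assms
proof (induction "card V" arbitrary: V)
  case 0
  then show ?case by simp
next
  case (Suc n)
  show ?case
  proof (cases "n = 0")
    case True
    then obtain a where "V = {a}" using Suc.hyps(2) card_1_singletonE by (metis One_nat_def)
    then show ?thesis by simp
  next
    case False
    define m where "m = Max V"
    define V' where "V' = V - {m}"
    have mV: "m \<in> V" unfolding m_def using Suc.prems by simp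
    have cV': "card V' = n" unfolding V'_def using Suc.hyps(2) mV Suc.prems by simp
    have fV': "finite V'" unfolding V'_def using Suc.prems by simp
    have neV': "V' \<noteq> {}" using cV' False by auto
    have sub: "V' \<subseteq> V" unfolding V'_def by auto
    have gap': "b - a \<le> G" if "a\<in>V'" "b\<in>V'" "a<b" "\<forall>z\<in>V'. z \<le> a \<or> b \<le> z" for a b
    proof (rule Suc.prems(4))
      show "a \<in> V" "b \<in> V" "a < b" using that sub by auto
      show "\<forall>z\<in>V. z \<le> a \<or> b \<le> z"
      proof
        fix z assume "z \<in> V"
        show "z \<le> a \<or> b \<le> z"
        proof (cases "z = m")
          case True
          then show ?thesis unfolding m_def using Suc.prems(1) \<open>b \<in> V\<close> by simp
        next
          case False
          then show ?thesis using that(4) \<open>z\<in>V\<close> unfolding V'_def by auto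
        qed
      qed
    qed
    have IH: "Max V' - Min V' \<le> real (card V' - 1) * G"
      by (rule Suc.hyps(1)[OF cV'[symmetric] fV' neV' Suc.prems(3) gap'])
    define m' where "m' = Max V'"
    have m'V': "m' \<in> V'" unfolding m'_def using fV' neV' by simp
    have m'm: "m' < m"
    proof -
      have "m' \<le> m" unfolding m_def using m'V' sub Suc.prems(1) by (meson Max_ge subsetD)
      moreover have "m' \<noteq> m" using m'V' unfolding V'_def by auto
      ultimately show ?thesis by simp
    qed
    have g1: "m - m' \<le> G"
    proof (rule Suc.prems(4))
      show "m' \<in> V" "m \<in> V" "m' < m" using m'V' sub mV m'm by auto
      show "\<forall>z\<in>V. z \<le> m' \<or> m \<le> z"
      proof
        fix z assume "z \<in> V"
        show "z \<le> m' \<or> m \<le> z"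
        proof (cases "z = m")
          case True then show ?thesis by simp
        next
          case False
          then have "z \<in> V'" using \<open>z \<in> V\<close> unfolding V'_def by auto
          then show ?thesis unfolding m'_def using fV' by simp
        qed
      qed
    qed
    have minV: "Min V \<in> V" using Suc.prems by simp
    have "Min V \<le> m'" using Suc.prems(1) m'V' sub by (meson Min_le subsetD)
    then have "Min V \<noteq> m" using m'm by simp
    then have "Min V \<in> V'" using minV unfolding V'_def by simp
    then have "Min V' \<le> Min V" using fV' by simp
    moreover have "real (card V - 1) = real (card V' - 1) + 1"
      using cV' Suc.hyps(2) False by simp
    ultimately show ?thesis using IH g1 unfolding m_def m'_def
      by (simp add: algebra_simps)
  qed
qed



lemma Jdual_shift:
  fixes c :: "'x::finite \<Rightarrow> 'y::finite \<Rightarrow> real"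
  shows "Jdual e c \<mu> \<nu> (\<alpha>(x := \<alpha> x + t)) \<beta> = Jdual e c \<mu> \<nu> \<alpha> \<beta> + t * \<mu> x
     - e * (exp (t/e) - 1) * (\<Sum>y\<in>UNIV. Kmat e c \<mu> \<nu> x y * exp ((\<alpha> x + \<beta> y)/e))"
proof -
  have s1: "(\<Sum>x'\<in>UNIV. (\<alpha>(x := \<alpha> x + t)) x' * \<mu> x') = (\<Sum>x'\<in>UNIV. \<alpha> x' * \<mu> x') + t * \<mu> x"
  proof -
    have "(\<Sum>x'\<in>UNIV. (\<alpha>(x := \<alpha> x + t)) x' * \<mu> x') = (\<Sum>x'\<in>UNIV. \<alpha> x' * \<mu> x' + (if x' = x then t * \<mu> x else 0))"
      by (rule sum.cong) (auto simp: algebra_simps)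
    also have "\<dots> = (\<Sum>x'\<in>UNIV. \<alpha> x' * \<mu> x') + t * \<mu> x"
      by (simp add: sum.distrib)
    finally show ?thesis .
  qed
  have s2: "(\<Sum>x'\<in>UNIV. \<Sum>y\<in>UNIV. Kmat e c \<mu> \<nu> x' y * (exp (((\<alpha>(x := \<alpha> x + t)) x' + \<beta> y)/e) - 1))
     = (\<Sum>x'\<in>UNIV. \<Sum>y\<in>UNIV. Kmat e c \<mu> \<nu> x' y * (exp ((\<alpha> x' + \<beta> y)/e) - 1))
       + (exp (t/e) - 1) * (\<Sum>y\<in>UNIV. Kmat e c \<mu> \<nu> x y * exp ((\<alpha> x + \<beta> y)/e))"
  proof -
    have "(\<Sum>x'\<in>UNIV. \<Sum>y\<in>UNIV. Kmat e c \<mu> \<nu> x' y * (exp (((\<alpha>(x := \<alpha> x + t)) x' + \<beta> y)/e) - 1))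
      = (\<Sum>x'\<in>UNIV. (\<Sum>y\<in>UNIV. Kmat e c \<mu> \<nu> x' y * (exp ((\<alpha> x' + \<beta> y)/e) - 1))
          + (if x' = x then (exp (t/e) - 1) * (\<Sum>y\<in>UNIV. Kmat e c \<mu> \<nu> x y * exp ((\<alpha> x + \<beta> y)/e)) else 0))"
    proof (rule sum.cong)
      fix x' assume "x' \<in> (UNIV::'x set)"
      show "(\<Sum>y\<in>UNIV. Kmat e c \<mu> \<nu> x' y * (exp (((\<alpha>(x := \<alpha> x + t)) x' + \<beta> y)/e) - 1)) =
         (\<Sum>y\<in>UNIV. Kmat e c \<mu> \<nu> x' y * (exp ((\<alpha> x' + \<beta> y)/e) - 1))
          + (if x' = x then (exp (t/e) - 1) * (\<Sum>y\<in>UNIV. Kmat e c \<mu> \<nu> x y * exp ((\<alpha> x + \<beta> y)/e)) else 0)"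
      proof (cases "x' = x")
        case True
        have "\<And>y. exp ((\<alpha> x + t + \<beta> y)/e) = exp ((\<alpha> x + \<beta> y)/e) * exp (t/e)"
          by (simp add: add_divide_distrib flip: exp_add)
        then show ?thesis using True
          by (simp add: sum_distrib_left flip: sum.distrib) (simp add: algebra_simps)
      qed simp
    qed simp
    also have "\<dots> = (\<Sum>x'\<in>UNIV. \<Sum>y\<in>UNIV. Kmat e c \<mu> \<nu> x' y * (exp ((\<alpha> x' + \<beta> y)/e) - 1))
       + (exp (t/e) - 1) * (\<Sum>y\<in>UNIV. Kmat e c \<mu> \<nu> x y * exp ((\<alpha> x + \<beta> y)/e))"
      by (simp add: sum.distrib)
    finally show ?thesis .
  qed
  show ?thesis unfolding Jdual_def s1 s2 by (simp add: algebra_simps)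
qed

lemma foc_x:
  fixes c :: "'x::finite \<Rightarrow> 'y::finite \<Rightarrow> real"
  assumes mx: "is_maximizer_J e c \<mu> \<nu> \<alpha> \<beta>" and e: "e > 0"
    and mu: "\<And>x. \<mu> x > 0" and nu: "\<And>y. \<nu> y > 0"
  shows "(\<Sum>y\<in>UNIV. Kmat e c \<mu> \<nu> x y * exp ((\<alpha> x + \<beta> y)/e)) = \<mu> x"
proof (rule ccontr)
  define W where "W = (\<Sum>y\<in>UNIV. Kmat e c \<mu> \<nu> x y * exp ((\<alpha> x + \<beta> y)/e))"
  assume "W \<noteq> \<mu> x"
  have Wpos: "W > 0" unfolding W_def Kmat_def
    by (rule sum_pos) (auto intro!: mult_pos_pos mu nu)
  define z where "z = ln (\<mu> x / W)"
  have ez: "exp z = \<mu> x / W" unfolding z_def using Wpos mu[of x] by simp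
  have z0: "z \<noteq> 0" using ez \<open>W \<noteq> \<mu> x\<close> Wpos by auto
  have "1 + (-z) < exp (-z)" using z0 by (intro exp_strict) simp
  then have key: "0 < W * exp z * (z - 1 + exp (-z))"
    using Wpos by (intro mult_pos_pos) auto
  have "W * exp z * (z - 1 + exp (-z)) = z * \<mu> x - (exp z - 1) * W"
    using Wpos ez by (simp add: exp_minus field_simps)
  with key have pos: "0 < e * (z * \<mu> x - (exp z - 1) * W)" using e by simp
  have "Jdual e c \<mu> \<nu> (\<alpha>(x := \<alpha> x + e * z)) \<beta> = Jdual e c \<mu> \<nu> \<alpha> \<beta> + e * (z * \<mu> x - (exp z - 1) * W)"
    unfolding Jdual_shift W_def using e by (simp add: algebra_simps)
  with pos have "Jdual e c \<mu> \<nu> \<alpha> \<beta> < Jdual e c \<mu> \<nu> (\<alpha>(x := \<alpha> x + e * z)) \<beta>" by simp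
  with mx show False unfolding is_maximizer_J_def by (meson not_le)
qed

lemma Jdual_swap:
  fixes c :: "'x::finite \<Rightarrow> 'y::finite \<Rightarrow> real"
  shows "Jdual e c \<mu> \<nu> \<alpha> \<beta> = Jdual e (\<lambda>y x. c x y) \<nu> \<mu> \<beta> \<alpha>"
  unfolding Jdual_def Kmat_def
  by (subst sum.swap) (simp add: algebra_simps)

lemma foc_y:
  fixes c :: "'x::finite \<Rightarrow> 'y::finite \<Rightarrow> real"
  assumes mx: "is_maximizer_J e c \<mu> \<nu> \<alpha> \<beta>" and e: "e > 0"
    and mu: "\<And>x. \<mu> x > 0" and nu: "\<And>y. \<nu> y > 0"
  shows "(\<Sum>x\<in>UNIV. Kmat e c \<mu> \<nu> x y * exp ((\<alpha> x + \<beta> y)/e)) = \<nu> y"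
proof -
  have "is_maximizer_J e (\<lambda>y x. c x y) \<nu> \<mu> \<beta> \<alpha>"
    using mx unfolding is_maximizer_J_def by (metis Jdual_swap)
  from foc_x[OF this e nu mu, of y] show ?thesis
    unfolding Kmat_def by (simp add: algebra_simps)
qed



lemma sum_split_compl:
  fixes f :: "'a::finite \<Rightarrow> real"
  shows "(\<Sum>y\<in>UNIV. f y) = (\<Sum>y\<in>T. f y) + (\<Sum>y\<in>-T. f y)"
  by (metis Compl_eq_Diff_UNIV finite inf_top_left sum.Int_Diff)

lemma mass_diff:
  fixes \<pi> :: "'x::finite \<Rightarrow> 'y::finite \<Rightarrow> real"
  assumes row: "\<And>x. (\<Sum>y\<in>UNIV. \<pi> x y) = \<mu> x" and col: "\<And>y. (\<Sum>x\<in>UNIV. \<pi> x y) = \<nu> y"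
  shows "(\<Sum>x\<in>S. \<Sum>y\<in>-T. \<pi> x y) - (\<Sum>x\<in>-S. \<Sum>y\<in>T. \<pi> x y) = (\<Sum>x\<in>S. \<mu> x) - (\<Sum>y\<in>T. \<nu> y)"
proof -
  have a: "(\<Sum>x\<in>S. \<mu> x) = (\<Sum>x\<in>S. \<Sum>y\<in>T. \<pi> x y) + (\<Sum>x\<in>S. \<Sum>y\<in>-T. \<pi> x y)"
    by (simp add: row[symmetric] sum_split_compl[of _ T] sum.distrib)
  have "(\<Sum>y\<in>T. \<nu> y) = (\<Sum>x\<in>UNIV. \<Sum>y\<in>T. \<pi> x y)"
    by (simp add: col[symmetric] sum.swap[of _ T])
  also have "\<dots> = (\<Sum>x\<in>S. \<Sum>y\<in>T. \<pi> x y) + (\<Sum>x\<in>-S. \<Sum>y\<in>T. \<pi> x y)"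
    by (rule sum_split_compl)
  finally show ?thesis using a by simp
qed

lemma upper_bd:
  fixes \<mu> :: "'x::finite \<Rightarrow> real" and \<nu> :: "'y::finite \<Rightarrow> real"
  assumes mu: "\<And>x. \<mu> x \<ge> 0" and nu: "\<And>y. \<nu> y \<ge> 0"
    and smu: "(\<Sum>x\<in>UNIV. \<mu> x) = 1" and snu: "(\<Sum>y\<in>UNIV. \<nu> y) = 1"
    and f: "\<And>x y. x \<in> A \<Longrightarrow> y \<in> B \<Longrightarrow> f x y \<le> L"
  shows "(\<Sum>x\<in>A. \<Sum>y\<in>B. \<mu> x * \<nu> y * exp (f x y)) \<le> exp L"
proof -
  have "(\<Sum>x\<in>A. \<Sum>y\<in>B. \<mu> x * \<nu> y * exp (f x y)) \<le> (\<Sum>x\<in>A. \<Sum>y\<in>B. \<mu> x * \<nu> y * exp L)"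
    by (intro sum_mono mult_left_mono) (auto simp: f mu nu)
  also have "\<dots> = exp L * ((\<Sum>x\<in>A. \<mu> x) * (\<Sum>y\<in>B. \<nu> y))"
    by (simp add: sum_product sum_distrib_left algebra_simps) (rule sum.swap)
  also have "\<dots> \<le> exp L * 1"
  proof -
    have "(\<Sum>x\<in>A. \<mu> x) \<le> 1" using smu by (metis finite sum_mono2 subset_UNIV mu)
    moreover have "(\<Sum>y\<in>B. \<nu> y) \<le> 1" using snu by (metis finite sum_mono2 subset_UNIV nu)
    moreover have "0 \<le> (\<Sum>x\<in>A. \<mu> x)" "0 \<le> (\<Sum>y\<in>B. \<nu> y)" by (auto intro: sum_nonneg mu nu)
    ultimately show ?thesis by (intro mult_left_mono) (auto intro: mult_le_one)
  qed
  finally show ?thesis by simp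
qed

lemma lower_bd:
  fixes \<mu> :: "'x::finite \<Rightarrow> real" and \<nu> :: "'y::finite \<Rightarrow> real"
  assumes mu: "\<And>x. \<mu> x \<ge> 0" and nu: "\<And>y. \<nu> y \<ge> 0" and xy: "x \<in> A" "y \<in> B"
  shows "\<mu> x * \<nu> y * exp (f x y) \<le> (\<Sum>x\<in>A. \<Sum>y\<in>B. \<mu> x * \<nu> y * exp (f x y))"
proof -
  have "\<mu> x * \<nu> y * exp (f x y) \<le> (\<Sum>y\<in>B. \<mu> x * \<nu> y * exp (f x y))"
    by (rule member_le_sum) (auto simp: xy mu nu)
  also have "\<dots> \<le> (\<Sum>x\<in>A. \<Sum>y\<in>B. \<mu> x * \<nu> y * exp (f x y))"
    by (rule member_le_sum[where f = "\<lambda>x. \<Sum>y\<in>B. \<mu> x * \<nu> y * exp (f x y)"]) (auto simp: xy mu nu intro!: sum_nonneg)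
  finally show ?thesis .
qed

lemma pos_bd:
  fixes \<mu> :: "'x::finite \<Rightarrow> real" and \<nu> :: "'y::finite \<Rightarrow> real"
  assumes mu: "\<And>x. \<mu> x > 0" and nu: "\<And>y. \<nu> y > 0" and ne: "A \<noteq> {}" "B \<noteq> {}"
  shows "0 < (\<Sum>x\<in>A. \<Sum>y\<in>B. \<mu> x * \<nu> y * exp (f x y))"
  using ne by (intro sum_pos) (auto intro!: sum_pos mult_pos_pos mu nu)



lemma core_gap:
  fixes \<mu> :: "'x::finite \<Rightarrow> real" and \<nu> :: "'y::finite \<Rightarrow> real"
    and w1 w2 :: "'x \<Rightarrow> 'y \<Rightarrow> real" and u :: "'x \<Rightarrow> real" and v :: "'y \<Rightarrow> real"
    and r :: "'x \<Rightarrow> int" and s :: "'y \<Rightarrow> int" and M :: nat and e1 e2 a b :: real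
  assumes M: "M > 0"
    and mu_def: "\<And>x. \<mu> x = real_of_int (r x) / real M"
    and nu_def: "\<And>y. \<nu> y = real_of_int (s y) / real M"
    and r_pos: "\<And>x. r x > 0" and s_pos: "\<And>y. s y > 0"
    and smu: "(\<Sum>x\<in>UNIV. \<mu> x) = 1" and snu: "(\<Sum>y\<in>UNIV. \<nu> y) = 1"
    and e: "e2 < e1" "0 < e2"
    and row1: "\<And>x. (\<Sum>y\<in>UNIV. \<mu> x * \<nu> y * exp (w1 x y / e1)) = \<mu> x"
    and col1: "\<And>y. (\<Sum>x\<in>UNIV. \<mu> x * \<nu> y * exp (w1 x y / e1)) = \<nu> y"
    and row2: "\<And>x. (\<Sum>y\<in>UNIV. \<mu> x * \<nu> y * exp (w2 x y / e2)) = \<mu> x"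
    and col2: "\<And>y. (\<Sum>x\<in>UNIV. \<mu> x * \<nu> y * exp (w2 x y / e2)) = \<nu> y"
    and D: "\<And>x y. u x + v y = w2 x y - w1 x y"
    and ab: "a < b"
    and du: "\<And>x. u x \<le> a \<or> b \<le> u x" and dv: "\<And>y. - v y \<le> a \<or> b \<le> - v y"
    and hi: "(\<exists>x. b \<le> u x) \<or> (\<exists>y. b \<le> - v y)"
    and lo: "(\<exists>x. u x \<le> a) \<or> (\<exists>y. - v y \<le> a)"
  shows "b - a \<le> 2 * e1 * ln (real M)"
proof -
  define g where "g = b - a"
  have Mr: "real M > 0" using M by simp
  have lnM: "ln (real M) \<ge> 0" using M by simp
  have mu_ge: "\<mu> x \<ge> 1 / real M" for x
    using r_pos[of x] Mr unfolding mu_def by (simp add: divide_right_mono)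
  have nu_ge: "\<nu> y \<ge> 1 / real M" for y
    using s_pos[of y] Mr unfolding nu_def by (simp add: divide_right_mono)
  have mu_pos: "\<mu> x > 0" for x using mu_ge[of x] Mr by (smt (verit) divide_pos_pos)
  have nu_pos: "\<nu> y > 0" for y using nu_ge[of y] Mr by (smt (verit) divide_pos_pos)
  have mu0: "\<mu> x \<ge> 0" for x using mu_pos[of x] by simp
  have nu0: "\<nu> y \<ge> 0" for y using nu_pos[of y] by simp
  have wle: "w x y \<le> ee * ln (real M)"
    if row: "\<And>x. (\<Sum>y\<in>UNIV. \<mu> x * \<nu> y * exp (w x y / ee)) = \<mu> x" and ee: "ee > 0" for w ee x y
  proof -
    have "\<mu> x * \<nu> y * exp (w x y / ee) \<le> (\<Sum>y\<in>UNIV. \<mu> x * \<nu> y * exp (w x y / ee))"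
      by (rule member_le_sum) (auto intro!: mult_nonneg_nonneg mu0 nu0)
    then have "\<mu> x * (\<nu> y * exp (w x y / ee)) \<le> \<mu> x * 1" using row[of x] by (simp add: mult.assoc)
    then have "\<nu> y * exp (w x y / ee) \<le> 1" using mu_pos[of x] by simp
    moreover have "(1/real M) * exp (w x y / ee) \<le> \<nu> y * exp (w x y / ee)"
      using nu_ge[of y] by (intro mult_right_mono) auto
    ultimately have "exp (w x y / ee) / real M \<le> 1" by simp
    then have "exp (w x y / ee) \<le> real M" using Mr by (simp add: field_simps)
    then have "w x y / ee \<le> ln (real M)" using Mr by (metis exp_le_cancel_iff exp_ln)
    then show ?thesis using ee by (simp add: field_simps)
  qed
  have w1le: "w1 x y \<le> e1 * ln (real M)" for x y using wle[OF row1] e by simp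
  have w2le: "w2 x y \<le> e2 * ln (real M)" for x y using wle[OF row2] e by simp
  define S where "S = {x. b \<le> u x}"
  define T where "T = {y. b \<le> - v y}"
  have Sc: "x \<in> -S \<Longrightarrow> u x \<le> a" for x using du[of x] unfolding S_def by auto
  have Tc: "y \<in> -T \<Longrightarrow> - v y \<le> a" for y using dv[of y] unfolding T_def by auto
  have DA: "x \<in> S \<Longrightarrow> y \<in> -T \<Longrightarrow> w2 x y - w1 x y \<ge> g" for x y
    using Tc[of y] D[of x y] unfolding S_def g_def by auto
  have DB: "x \<in> -S \<Longrightarrow> y \<in> T \<Longrightarrow> w2 x y - w1 x y \<le> -g" for x y
    using Sc[of x] D[of x y] unfolding T_def g_def by auto
  define P1 where "P1 = (\<Sum>x\<in>S. \<Sum>y\<in>-T. \<mu> x * \<nu> y * exp (w1 x y / e1))"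
  define Q1 where "Q1 = (\<Sum>x\<in>-S. \<Sum>y\<in>T. \<mu> x * \<nu> y * exp (w1 x y / e1))"
  define P2 where "P2 = (\<Sum>x\<in>S. \<Sum>y\<in>-T. \<mu> x * \<nu> y * exp (w2 x y / e2))"
  define Q2 where "Q2 = (\<Sum>x\<in>-S. \<Sum>y\<in>T. \<mu> x * \<nu> y * exp (w2 x y / e2))"
  define k where "k = (\<Sum>x\<in>S. r x) - (\<Sum>y\<in>T. s y)"
  have kdef: "(\<Sum>x\<in>S. \<mu> x) - (\<Sum>y\<in>T. \<nu> y) = real_of_int k / real M"
    unfolding k_def mu_def nu_def by (simp add: sum_divide_distrib diff_divide_distrib)
  have PQ1: "P1 - Q1 = real_of_int k / real M" unfolding P1_def Q1_def kdef[symmetric]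
    by (rule mass_diff[OF row1 col1])
  have PQ2: "P2 - Q2 = real_of_int k / real M" unfolding P2_def Q2_def kdef[symmetric]
    by (rule mass_diff[OF row2 col2])
  have Q1nn: "Q1 \<ge> 0" unfolding Q1_def by (auto intro!: sum_nonneg mult_nonneg_nonneg mu0 nu0)
  have P1nn: "P1 \<ge> 0" unfolding P1_def by (auto intro!: sum_nonneg mult_nonneg_nonneg mu0 nu0)
  have Q2nn: "Q2 \<ge> 0" unfolding Q2_def by (auto intro!: sum_nonneg mult_nonneg_nonneg mu0 nu0)
  show ?thesis
  proof (cases "k = 0")
    case False
    show ?thesis
    proof (cases "k > 0")
      case True
      then have "real_of_int k \<ge> 1" by simp
      then have "1 / real M \<le> real_of_int k / real M" using Mr by (simp add: divide_right_mono)
      then have "1 / real M \<le> P1" using PQ1 Q1nn by linarith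
      moreover have "P1 \<le> exp (ln (real M) - g / e1)" unfolding P1_def
      proof (rule upper_bd[OF mu0 nu0 smu snu])
        fix x y assume "x \<in> S" "y \<in> -T"
        then have "w2 x y - w1 x y \<ge> g" by (rule DA)
        then have "w1 x y \<le> e2 * ln (real M) - g" using w2le[of x y] by linarith
        also have "\<dots> \<le> e1 * ln (real M) - g" using e lnM by (simp add: mult_right_mono)
        finally show "w1 x y / e1 \<le> ln (real M) - g / e1" using e by (simp add: field_simps)
      qed
      ultimately have "1 / real M \<le> exp (ln (real M) - g / e1)" by linarith
      then have "ln (1 / real M) \<le> ln (exp (ln (real M) - g / e1))"
        using Mr by (subst ln_le_cancel_iff) auto
      then have "ln (1 / real M) \<le> ln (real M) - g / e1" by simp
      then have "- ln (real M) \<le> ln (real M) - g / e1" using Mr by (simp add: ln_div)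
      then have "g / e1 \<le> 2 * ln (real M)" by simp
      then show ?thesis using e unfolding g_def by (simp add: field_simps)
    next
      case False
      with \<open>k \<noteq> 0\<close> have "real_of_int k \<le> -1" by simp
      then have "real_of_int k / real M \<le> (- 1) / real M" using Mr by (intro divide_right_mono) auto
      moreover have "P2 \<ge> 0" unfolding P2_def by (auto intro!: sum_nonneg mult_nonneg_nonneg mu0 nu0)
      ultimately have Q2ge: "1 / real M \<le> Q2" using PQ2 by simp
      show ?thesis
      proof (rule ccontr)
        assume "\<not> b - a \<le> 2 * e1 * ln (real M)"
        then have gbig: "g > 2 * e1 * ln (real M)" unfolding g_def by simp
        have "Q2 \<le> exp (ln (real M) - g / e1)" unfolding Q2_def
        proof (rule upper_bd[OF mu0 nu0 smu snu])
          fix x y assume "x \<in> -S" "y \<in> T"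
          then have "w2 x y - w1 x y \<le> - g" by (rule DB)
          then have h: "w2 x y \<le> e1 * ln (real M) - g" using w1le[of x y] by linarith
          have "0 \<le> e1 * ln (real M)" using e lnM by simp
          then have neg: "e1 * ln (real M) - g \<le> 0" using gbig by linarith
          have "w2 x y / e2 \<le> (e1 * ln (real M) - g) / e2" using h e by (simp add: divide_right_mono)
          also have "\<dots> \<le> (e1 * ln (real M) - g) / e1"
            using neg e by (intro divide_left_mono_neg) auto
          finally show "w2 x y / e2 \<le> ln (real M) - g / e1" using e by (simp add: field_simps)
        qed
        with Q2ge have "1 / real M \<le> exp (ln (real M) - g / e1)" by linarith
        then have "ln (1 / real M) \<le> ln (exp (ln (real M) - g / e1))"
          using Mr by (subst ln_le_cancel_iff) auto
        then have "ln (1 / real M) \<le> ln (real M) - g / e1" by simp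
        then have "- ln (real M) \<le> ln (real M) - g / e1" using Mr by (simp add: ln_div)
        then have "g \<le> 2 * e1 * ln (real M)" using e by (simp add: field_simps)
        with gbig show False by simp
      qed
    qed
  next
    case True
    then have eq1: "P1 = Q1" and eq2: "P2 = Q2" using PQ1 PQ2 by simp_all
    have ne: "S \<noteq> {} \<and> -T \<noteq> {} \<and> -S \<noteq> {} \<and> T \<noteq> {}"
    proof (rule ccontr)
      assume nn: "\<not> ?thesis"
      have "(S \<noteq> {} \<and> -T \<noteq> {}) = (-S \<noteq> {} \<and> T \<noteq> {})"
      proof
        assume "S \<noteq> {} \<and> -T \<noteq> {}"
        then have "P1 > 0" unfolding P1_def by (intro pos_bd mu_pos nu_pos) auto
        then have "Q1 > 0" using eq1 by simp
        then show "-S \<noteq> {} \<and> T \<noteq> {}" unfolding Q1_def by auto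
      next
        assume "-S \<noteq> {} \<and> T \<noteq> {}"
        then have "Q1 > 0" unfolding Q1_def by (intro pos_bd mu_pos nu_pos) auto
        then have "P1 > 0" using eq1 by simp
        then show "S \<noteq> {} \<and> -T \<noteq> {}" unfolding P1_def by auto
      qed
      with nn have c: "(S = {} \<or> T = UNIV) \<and> (S = UNIV \<or> T = {})" by auto
      have h1: "S \<noteq> {} \<or> T \<noteq> {}" using hi unfolding S_def T_def by auto
      have h2: "S \<noteq> UNIV \<or> T \<noteq> UNIV"
      proof (cases "\<exists>x. u x \<le> a")
        case True
        then obtain x where "u x \<le> a" by blast
        then have "x \<notin> S" using ab unfolding S_def by auto
        then show ?thesis by auto
      next
        case False
        then obtain y where "- v y \<le> a" using lo by blast
        then have "y \<notin> T" using ab unfolding T_def by auto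
        then show ?thesis by auto
      qed
      show False using c h1 h2 by auto
    qed
    have finA: "finite (S \<times> (- T))" and finB: "finite ((- S) \<times> T)" by simp_all
    have neA: "S \<times> (- T) \<noteq> {}" and neB: "(- S) \<times> T \<noteq> {}" using ne by auto
    obtain p1 where p1: "p1 \<in> S \<times> (- T)" "\<forall>z\<in>S \<times> (- T). w1 (fst z) (snd z) \<le> w1 (fst p1) (snd p1)"
      using fin_argmax[OF finA neA, of "\<lambda>z. w1 (fst z) (snd z)"] by blast
    obtain q2 where q2: "q2 \<in> (- S) \<times> T" "\<forall>z\<in>(- S) \<times> T. w2 (fst z) (snd z) \<le> w2 (fst q2) (snd q2)"
      using fin_argmax[OF finB neB, of "\<lambda>z. w2 (fst z) (snd z)"] by blast
    have cmp: "wa x y \<le> wa x' y' + 2 * ee * ln (real M)"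
      if eq: "(\<Sum>x\<in>A. \<Sum>y\<in>B. \<mu> x * \<nu> y * exp (wa x y / ee)) = (\<Sum>x\<in>A'. \<Sum>y\<in>B'. \<mu> x * \<nu> y * exp (wa x y / ee))"
        and xy: "x \<in> A" "y \<in> B" and xy': "x' \<in> A'" "y' \<in> B'"
        and mx: "\<And>x y. x \<in> A' \<Longrightarrow> y \<in> B' \<Longrightarrow> wa x y \<le> wa x' y'"
        and ee: "ee > 0"
      for wa ee x y x' y' and A A' :: "'x set" and B B' :: "'y set"
    proof -
      have "\<mu> x * \<nu> y * exp (wa x y / ee) \<le> (\<Sum>x\<in>A. \<Sum>y\<in>B. \<mu> x * \<nu> y * exp (wa x y / ee))"
        by (rule lower_bd[where f = "\<lambda>x y. wa x y / ee"]) (auto simp: mu0 nu0 xy)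
      also have "\<dots> = (\<Sum>x\<in>A'. \<Sum>y\<in>B'. \<mu> x * \<nu> y * exp (wa x y / ee))" by (rule eq)
      also have "\<dots> \<le> exp (wa x' y' / ee)"
        by (rule upper_bd[OF mu0 nu0 smu snu]) (use mx ee in \<open>simp add: divide_right_mono\<close>)
      finally have h: "\<mu> x * \<nu> y * exp (wa x y / ee) \<le> exp (wa x' y' / ee)" .
      have "(1/real M) * (1/real M) * exp (wa x y / ee) \<le> \<mu> x * \<nu> y * exp (wa x y / ee)"
        using mu_ge[of x] nu_ge[of y] Mr
        by (intro mult_right_mono mult_mono) (auto simp: mu0 nu0)
      with h have "exp (wa x y / ee) / (real M * real M) \<le> exp (wa x' y' / ee)" by simp
      then have "exp (wa x y / ee) \<le> exp (wa x' y' / ee) * (real M * real M)"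
        using Mr by (simp add: pos_divide_le_eq)
      also have "\<dots> = exp (wa x' y' / ee + (ln (real M) + ln (real M)))"
        using Mr by (simp only: exp_add exp_ln of_nat_0_less_iff M)
      also have "\<dots> = exp (wa x' y' / ee + 2 * ln (real M))" by (simp only: mult_2)
      finally have "wa x y / ee \<le> wa x' y' / ee + 2 * ln (real M)" by simp
      then show ?thesis using ee by (simp add: field_simps)
    qed
    obtain x1 y1 where xy1: "p1 = (x1, y1)" by (cases p1)
    obtain x2 y2 where xy2: "q2 = (x2, y2)" by (cases q2)
    have c2: "w2 x1 y1 \<le> w2 x2 y2 + 2 * e2 * ln (real M)"
      by (rule cmp[OF eq2[unfolded P2_def Q2_def]]) (use p1 q2 xy1 xy2 e in auto)
    have c1: "w1 x2 y2 \<le> w1 x1 y1 + 2 * e1 * ln (real M)"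
      by (rule cmp[OF eq1[symmetric, unfolded P1_def Q1_def]]) (use p1 q2 xy1 xy2 e in auto)
    have d1: "w2 x1 y1 - w1 x1 y1 \<ge> g" using DA p1 xy1 by auto
    have d2: "w2 x2 y2 - w1 x2 y2 \<le> -g" using DB q2 xy2 by auto
    have "e2 * ln (real M) \<le> e1 * ln (real M)" using e lnM by (simp add: mult_right_mono)
    then show ?thesis using c1 c2 d1 d2 unfolding g_def by linarith
  qed
qed



lemma kmat_eq:
  "Kmat e c \<mu> \<nu> x y * exp ((\<alpha> x + \<beta> y) / e) = \<mu> x * \<nu> y * exp ((\<alpha> x + \<beta> y - c x y) / e)"
proof -
  have "exp (- c x y / e) * exp ((\<alpha> x + \<beta> y) / e) = exp ((\<alpha> x + \<beta> y - c x y) / e)"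
    by (simp add: diff_divide_distrib flip: exp_add)
  then show ?thesis unfolding Kmat_def by (simp add: algebra_simps)
qed

theorem mainTheorem6:
  fixes c :: "'x::finite \<Rightarrow> 'y::finite \<Rightarrow> real"
    and \<mu> :: "'x \<Rightarrow> real" and \<nu> :: "'y \<Rightarrow> real"
    and r :: "'x \<Rightarrow> int" and s :: "'y \<Rightarrow> int"
    and M N :: nat and \<epsilon>1 \<epsilon>2 :: real
    and \<alpha>1 \<alpha>2 :: "'x \<Rightarrow> real" and \<beta>1 \<beta>2 :: "'y \<Rightarrow> real"
  assumes N: "max (CARD('x)) (CARD('y)) \<le> N"
    and c_nonneg: "\<And>x y. c x y \<ge> 0"
    and M_pos: "M > 0"
    and r_pos: "\<And>x. r x > 0" and s_pos: "\<And>y. s y > 0"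
    and mu_def: "\<And>x. \<mu> x = real_of_int (r x) / real M"
    and nu_def: "\<And>y. \<nu> y = real_of_int (s y) / real M"
    and mu_prob: "(\<Sum>x\<in>UNIV. \<mu> x) = 1"
    and nu_prob: "(\<Sum>y\<in>UNIV. \<nu> y) = 1"
    and eps: "\<epsilon>1 > \<epsilon>2" "\<epsilon>2 > 0"
    and max1: "is_maximizer_J \<epsilon>1 c \<mu> \<nu> \<alpha>1 \<beta>1"
    and max2: "is_maximizer_J \<epsilon>2 c \<mu> \<nu> \<alpha>2 \<beta>2"
  shows "Max (range (\<lambda>x. \<alpha>2 x - \<alpha>1 x)) - Min (range (\<lambda>x. \<alpha>2 x - \<alpha>1 x))
           \<le> \<epsilon>1 * real N * (4 * ln (real N) + 24 * ln (real M))
       \<and> Max (range (\<lambda>y. \<beta>2 y - \<beta>1 y)) - Min (range (\<lambda>y. \<beta>2 y - \<beta>1 y))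
           \<le> \<epsilon>1 * real N * (4 * ln (real N) + 24 * ln (real M))"
proof -
  have Mr: "real M > 0" using M_pos by simp
  have mu_pos: "\<mu> x > 0" for x using r_pos[of x] Mr unfolding mu_def by simp
  have nu_pos: "\<nu> y > 0" for y using s_pos[of y] Mr unfolding nu_def by simp
  have e1: "\<epsilon>1 > 0" using eps by simp
  define w1 where "w1 x y = \<alpha>1 x + \<beta>1 y - c x y" for x y
  define w2 where "w2 x y = \<alpha>2 x + \<beta>2 y - c x y" for x y
  define u where "u x = \<alpha>2 x - \<alpha>1 x" for x
  define v where "v y = \<beta>2 y - \<beta>1 y" for y
  have row1: "(\<Sum>y\<in>UNIV. \<mu> x * \<nu> y * exp (w1 x y / \<epsilon>1)) = \<mu> x" for x
    using foc_x[OF max1 e1 mu_pos nu_pos, of x] unfolding w1_def kmat_eq .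
  have col1: "(\<Sum>x\<in>UNIV. \<mu> x * \<nu> y * exp (w1 x y / \<epsilon>1)) = \<nu> y" for y
    using foc_y[OF max1 e1 mu_pos nu_pos, of y] unfolding w1_def kmat_eq .
  have row2: "(\<Sum>y\<in>UNIV. \<mu> x * \<nu> y * exp (w2 x y / \<epsilon>2)) = \<mu> x" for x
    using foc_x[OF max2 eps(2) mu_pos nu_pos, of x] unfolding w2_def kmat_eq .
  have col2: "(\<Sum>x\<in>UNIV. \<mu> x * \<nu> y * exp (w2 x y / \<epsilon>2)) = \<nu> y" for y
    using foc_y[OF max2 eps(2) mu_pos nu_pos, of y] unfolding w2_def kmat_eq .
  have D: "u x + v y = w2 x y - w1 x y" for x y unfolding u_def v_def w1_def w2_def by simp
  define V where "V = range u \<union> range (\<lambda>y. - v y)"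
  define G where "G = 2 * \<epsilon>1 * ln (real M)"
  have lnM: "ln (real M) \<ge> 0" using M_pos by simp
  have G0: "G \<ge> 0" unfolding G_def using e1 lnM by simp
  have finV: "finite V" and neV: "V \<noteq> {}" unfolding V_def by auto
  have gapV: "b - a \<le> G" if "a\<in>V" "b\<in>V" "a<b" "\<forall>z\<in>V. z \<le> a \<or> b \<le> z" for a b
    unfolding G_def
  proof (rule core_gap[OF M_pos mu_def nu_def r_pos s_pos mu_prob nu_prob eps row1 col1 row2 col2 D \<open>a<b\<close>])
    show "u x \<le> a \<or> b \<le> u x" for x using that(4) unfolding V_def by auto
    show "- v y \<le> a \<or> b \<le> - v y" for y using that(4) unfolding V_def by auto
    show "(\<exists>x. b \<le> u x) \<or> (\<exists>y. b \<le> - v y)" using that(2) unfolding V_def by auto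
    show "(\<exists>x. u x \<le> a) \<or> (\<exists>y. - v y \<le> a)" using that(1) unfolding V_def by auto
  qed
  have spr: "Max V - Min V \<le> real (card V - 1) * G" by (rule spread[OF finV neV G0 gapV])
  have cardV: "card V \<le> 2 * N"
  proof -
    have "card V \<le> card (range u) + card (range (\<lambda>y. - v y))" unfolding V_def by (rule card_Un_le)
    also have "\<dots> \<le> CARD('x) + CARD('y)" by (intro add_mono card_image_le) auto
    also have "\<dots> \<le> 2 * N" using N by simp
    finally show ?thesis .
  qed
  have "0 < CARD('x)" by simp
  then have N1: "N \<ge> 1" using N by linarith
  have lnN: "ln (real N) \<ge> 0" using N1 by simp
  have bound: "Max V - Min V \<le> \<epsilon>1 * real N * (4 * ln (real N) + 24 * ln (real M))"
  proof -
    have "real (card V - 1) \<le> 2 * real N" using cardV by linarith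
    then have "real (card V - 1) * G \<le> (2 * real N) * G" using G0 by (rule mult_right_mono)
    also have "\<dots> = \<epsilon>1 * real N * (4 * ln (real M))" unfolding G_def by simp
    also have "\<dots> \<le> \<epsilon>1 * real N * (4 * ln (real N) + 24 * ln (real M))"
      using e1 lnN lnM by (intro mult_left_mono) auto
    finally show ?thesis using spr by linarith
  qed
  have diffV: "p - q \<le> Max V - Min V" if "p \<in> V" "q \<in> V" for p q
  proof -
    have "p \<le> Max V" using that finV by simp
    moreover have "Min V \<le> q" using that finV by simp
    ultimately show ?thesis by linarith
  qed
  have A: "Max (range u) - Min (range u) \<le> \<epsilon>1 * real N * (4 * ln (real N) + 24 * ln (real M))"
  proof -
    have "Max (range u) \<in> range u" by (rule Max_in) auto
    then obtain x0 where x0: "Max (range u) = u x0" by blast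
    have "Min (range u) \<in> range u" by (rule Min_in) auto
    then obtain x1 where x1: "Min (range u) = u x1" by blast
    have "u x0 - u x1 \<le> Max V - Min V" by (rule diffV) (auto simp: V_def)
    then show ?thesis using x0 x1 bound by linarith
  qed
  have B: "Max (range v) - Min (range v) \<le> \<epsilon>1 * real N * (4 * ln (real N) + 24 * ln (real M))"
  proof -
    have "Max (range v) \<in> range v" by (rule Max_in) auto
    then obtain y0 where y0: "Max (range v) = v y0" by blast
    have "Min (range v) \<in> range v" by (rule Min_in) auto
    then obtain y1 where y1: "Min (range v) = v y1" by blast
    have "(- v y1) - (- v y0) \<le> Max V - Min V" by (rule diffV) (auto simp: V_def)
    then show ?thesis using y0 y1 bound by linarith
  qed
  show ?thesis using A B unfolding u_def v_def by blast
qed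

end
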